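(* Let $K$ be a field, $S=K[x_1,\dots,x_n]$, $A\subseteq\{1,\dots,n\}$, $f=\prod_{j\in A}x_j$, and let $J\subset I\subset S$ be monomial ideals. Then $$\operatorname{fdepth} I/J\le \operatorname{fdepth}(I/J)_f.$$
   Context: $S_f=K[x_1,\dots,x_n,x_j^{-1}:j\in A]$ and $(I/J)_f=IS_f/JS_f$. Let $R$ be $S$ or $S_f$ and $J\subset I\subset R$ monomial ideals (ideals generated by monomials). A prime filtration of $I/J$ is a chain $\mathcal F: J=J_0\subset J_1\subset\cdots\subset J_r=I$ of monomial ideals of $R$ such that $J_i/J_{i-1}\cong (R/P_i)(-a_i)$ as $\mathbb Z^n$-graded modules, with $a_i\in\mathbb Z^n$ and each $P_i$ a monomial prime ideal of $R$. The support of $\mathcal F$ is $\operatorname{Supp}(\mathcal F)=\{P_1,\dots,P_r\}$, $\operatorname{fdepth}\mathcal F=\min\{\dim R/P: P\in\operatorname{Supp}(\mathcal F)\}$, and $\operatorname{fdepth} I/J$ is the maximum of $\operatorname{fdepth}\mathcal F$ over all prime filtrations $\mathcal F$ of $I/J$. *)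

theory Defs
  imports Main "HOL-Library.Extended_Nat"
begin

text \<open>A monomial of
  R = K[x_1,...,x_n, x_j^{-1} : j in A] is identified with its exponent vector
  u :: nat => int (u k = 0 for k outside {1..n}, u k >= 0 for k not in A).
  R = S corresponds to A = {}, R = S_f to the given A.
  A monomial ideal of R is identified with the set of monomials it contains
  (it is the K-span of them).\<close>

definition mons :: "nat \<Rightarrow> nat set \<Rightarrow> (nat \<Rightarrow> int) set" where
  "mons n A = {u. (\<forall>k. k \<notin> {1..n} \<longrightarrow> u k = 0) \<and> (\<forall>k\<in>{1..n} - A. 0 \<le> u k)}"

definition monomial_ideal :: "nat \<Rightarrow> nat set \<Rightarrow> (nat \<Rightarrow> int) set \<Rightarrow> bool" where
  "monomial_ideal n A I \<longleftrightarrow> I \<subseteq> mons n A \<and> (\<forall>u\<in>I. \<forall>v\<in>mons n A. (\<lambda>k. u k + v k) \<in> I)"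

text \<open>Monomials of the extended ideal I R_f (I a monomial ideal of S).\<close>
definition ext_ideal :: "nat \<Rightarrow> nat set \<Rightarrow> (nat \<Rightarrow> int) set \<Rightarrow> (nat \<Rightarrow> int) set" where
  "ext_ideal n A I = {(\<lambda>k. u k + v k) | u v. u \<in> I \<and> v \<in> mons n A}"

text \<open>Monomial prime ideal of R generated by the variables x_k, k in B
  (B a subset of {1..n} disjoint from A, so that the ideal is proper).\<close>
definition mprime :: "nat \<Rightarrow> nat set \<Rightarrow> nat set \<Rightarrow> (nat \<Rightarrow> int) set" where
  "mprime n A B = {u \<in> mons n A. \<exists>k\<in>B. 0 < u k}"

text \<open>Multidegrees of (R/P_B)(-a): a + (monomials of R not in P_B).\<close>
definition shifted_quot :: "nat \<Rightarrow> nat set \<Rightarrow> nat set \<Rightarrow> (nat \<Rightarrow> int) \<Rightarrow> (nat \<Rightarrow> int) set" where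
  "shifted_quot n A B a = (\<lambda>u k. a k + u k) ` (mons n A - mprime n A B)"

text \<open>A prime filtration J = J_0 \<subseteq> ... \<subseteq> J_r = I of monomial ideals of R:
  Js = [J_0,...,J_r], ps = [(a_1,B_1),...,(a_r,B_r)] with
  J_i/J_{i-1} \<cong> (R/P_{B_i})(-a_i) as Z^n-graded modules, i.e. the monomials of
  J_i not in J_{i-1} are exactly the multidegrees of (R/P_{B_i})(-a_i).\<close>
definition prime_filtration ::
  "nat \<Rightarrow> nat set \<Rightarrow> (nat \<Rightarrow> int) set \<Rightarrow> (nat \<Rightarrow> int) set \<Rightarrow>
   (nat \<Rightarrow> int) set list \<Rightarrow> ((nat \<Rightarrow> int) \<times> nat set) list \<Rightarrow> bool" where
  "prime_filtration n A J I Js ps \<longleftrightarrow>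
     length Js = Suc (length ps) \<and> Js ! 0 = J \<and> Js ! length ps = I \<and>
     (\<forall>i \<le> length ps. monomial_ideal n A (Js ! i)) \<and>
     (\<forall>i < length ps.
        Js ! i \<subseteq> Js ! Suc i \<and>
        (\<forall>k. k \<notin> {1..n} \<longrightarrow> fst (ps ! i) k = 0) \<and>
        snd (ps ! i) \<subseteq> {1..n} - A \<and>
        Js ! Suc i - Js ! i = shifted_quot n A (snd (ps ! i)) (fst (ps ! i)))"

text \<open>dim R/P_B = n - |B|.  fdepth of a filtration = min over its support
  (infinity for the empty filtration of the zero module).\<close>
definition fdepth_filt :: "nat \<Rightarrow> ((nat \<Rightarrow> int) \<times> nat set) list \<Rightarrow> enat" where
  "fdepth_filt n ps = (INF p \<in> set ps. enat (n - card (snd p)))"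

definition fdepth :: "nat \<Rightarrow> nat set \<Rightarrow> (nat \<Rightarrow> int) set \<Rightarrow> (nat \<Rightarrow> int) set \<Rightarrow> enat" where
  "fdepth n A J I = (SUP (Js, ps) \<in> {(Js, ps). prime_filtration n A J I Js ps}. fdepth_filt n ps)"

end

theory Submission
  imports Defs
begin

lemma mons_iff: "u \<in> mons n A \<longleftrightarrow> (\<forall>k. k \<notin> {1..n} \<longrightarrow> u k = 0) \<and> (\<forall>k. k \<in> {1..n} \<longrightarrow> k \<notin> A \<longrightarrow> 0 \<le> u k)"
  unfolding mons_def by auto

lemma mi_add: "monomial_ideal n A X \<Longrightarrow> u \<in> X \<Longrightarrow> v \<in> mons n A \<Longrightarrow> (\<lambda>k. u k + v k) \<in> X"
  unfolding monomial_ideal_def by blast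

lemma mi_sub: "monomial_ideal n A X \<Longrightarrow> X \<subseteq> mons n A"
  unfolding monomial_ideal_def by blast

lemma sq_iff: "x \<in> shifted_quot n A B a \<longleftrightarrow> (\<lambda>k. x k - a k) \<in> mons n A \<and> \<not>(\<exists>k\<in>B. 0 < x k - a k)"
proof
  assume "x \<in> shifted_quot n A B a"
  then obtain u where u: "u \<in> mons n A - mprime n A B" "x = (\<lambda>k. a k + u k)"
    unfolding shifted_quot_def by blast
  then have "(\<lambda>k. x k - a k) = u" by auto
  with u show "(\<lambda>k. x k - a k) \<in> mons n A \<and> \<not>(\<exists>k\<in>B. 0 < x k - a k)"
    unfolding mprime_def by auto
next
  assume h: "(\<lambda>k. x k - a k) \<in> mons n A \<and> \<not>(\<exists>k\<in>B. 0 < x k - a k)"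
  have "x = (\<lambda>k. a k + (\<lambda>k. x k - a k) k)" by auto
  moreover have "(\<lambda>k. x k - a k) \<in> mons n A - mprime n A B"
    using h unfolding mprime_def by auto
  ultimately show "x \<in> shifted_quot n A B a" unfolding shifted_quot_def by (rule image_eqI)
qed

lemma ext_char:
  assumes "monomial_ideal n {} X"
  shows "ext_ideal n A X = {u \<in> mons n A. \<exists>m\<in>X. \<forall>k\<in>{1..n}-A. m k \<le> u k}"
proof
  show "ext_ideal n A X \<subseteq> {u \<in> mons n A. \<exists>m\<in>X. \<forall>k\<in>{1..n}-A. m k \<le> u k}"
  proof
    fix u assume "u \<in> ext_ideal n A X"
    then obtain m v where mv: "m \<in> X" "v \<in> mons n A" "u = (\<lambda>k. m k + v k)"
      unfolding ext_ideal_def by blast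
    have m: "m \<in> mons n {}" using mv(1) mi_sub[OF assms] by blast
    have "u \<in> mons n A" using m mv(2,3) unfolding mons_iff by auto
    moreover have "\<forall>k\<in>{1..n}-A. m k \<le> u k" using mv(2,3) unfolding mons_iff by auto
    ultimately show "u \<in> {u \<in> mons n A. \<exists>m\<in>X. \<forall>k\<in>{1..n}-A. m k \<le> u k}" using mv(1) by blast
  qed
next
  show "{u \<in> mons n A. \<exists>m\<in>X. \<forall>k\<in>{1..n}-A. m k \<le> u k} \<subseteq> ext_ideal n A X"
  proof
    fix u assume "u \<in> {u \<in> mons n A. \<exists>m\<in>X. \<forall>k\<in>{1..n}-A. m k \<le> u k}"
    then obtain m where u: "u \<in> mons n A" and m: "m \<in> X" and le: "\<forall>k\<in>{1..n}-A. m k \<le> u k" by blast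
    have mm: "m \<in> mons n {}" using m mi_sub[OF assms] by blast
    have v: "(\<lambda>k. u k - m k) \<in> mons n A" using u mm le unfolding mons_iff by auto
    have "u = (\<lambda>k. m k + (\<lambda>k. u k - m k) k)" by auto
    then show "u \<in> ext_ideal n A X" using m v unfolding ext_ideal_def by (intro CollectI exI[of _ m] exI[of _ "\<lambda>k. u k - m k"]) simp
  qed
qed

lemma ext_mi:
  assumes "A \<subseteq> {1..n}" "monomial_ideal n {} X"
  shows "monomial_ideal n A (ext_ideal n A X)"
  unfolding monomial_ideal_def
proof
  show "ext_ideal n A X \<subseteq> mons n A" using ext_char[OF assms(2)] by blast
next
  show "\<forall>u\<in>ext_ideal n A X. \<forall>v\<in>mons n A. (\<lambda>k. u k + v k) \<in> ext_ideal n A X"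
  proof (intro ballI)
    fix u v assume u: "u \<in> ext_ideal n A X" and v: "v \<in> mons n A"
    then obtain m where u1: "u \<in> mons n A" and m: "m \<in> X" and le: "\<forall>k\<in>{1..n}-A. m k \<le> u k"
      using ext_char[OF assms(2)] by blast
    have "(\<lambda>k. u k + v k) \<in> mons n A" using u1 v unfolding mons_iff by auto
    moreover have "\<forall>k\<in>{1..n}-A. m k \<le> u k + v k" using le v unfolding mons_iff by force
    ultimately show "(\<lambda>k. u k + v k) \<in> ext_ideal n A X" using m ext_char[OF assms(2)] by blast
  qed
qed

lemma ext_mono: "X \<subseteq> Y \<Longrightarrow> ext_ideal n A X \<subseteq> ext_ideal n A Y"
  unfolding ext_ideal_def by blast

lemma bump:
  assumes "monomial_ideal n {} X" "m \<in> X" "k \<in> {1..n}"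
  shows "m(k := m k + 1) \<in> X"
proof -
  have e: "(\<lambda>j. if j = k then 1 else 0::int) \<in> mons n {}" using assms(3) unfolding mons_iff by auto
  have "m(k := m k + 1) = (\<lambda>j. m j + (\<lambda>j. if j = k then 1 else 0::int) j)" by auto
  then show ?thesis using mi_add[OF assms(1,2) e] by simp
qed

lemma key1:
  assumes A: "A \<subseteq> {1..n}" and mJ: "monomial_ideal n {} J" and mJ': "monomial_ideal n {} J'"
    and JJ: "J \<subseteq> J'" and dif: "J' - J = shifted_quot n {} B a"
    and BA: "B \<inter> A \<noteq> {}"
  shows "ext_ideal n A J' = ext_ideal n A J"
proof
  show "ext_ideal n A J \<subseteq> ext_ideal n A J'" using JJ by (rule ext_mono)
next
  obtain k where k: "k \<in> B" "k \<in> A" using BA by blast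
  have kn: "k \<in> {1..n}" using k A by blast
  show "ext_ideal n A J' \<subseteq> ext_ideal n A J"
  proof
    fix u assume "u \<in> ext_ideal n A J'"
    then obtain m where u: "u \<in> mons n A" and m: "m \<in> J'" and le: "\<forall>j\<in>{1..n}-A. m j \<le> u j"
      using ext_char[OF mJ'] by blast
    show "u \<in> ext_ideal n A J"
    proof (cases "m \<in> J")
      case True
      then show ?thesis using u le ext_char[OF mJ] by blast
    next
      case False
      then have "m \<in> shifted_quot n {} B a" using m dif by blast
      then have w: "(\<lambda>j. m j - a j) \<in> mons n {}" by (simp add: sq_iff)
      have m'J': "m(k := m k + 1) \<in> J'" using bump[OF mJ' m kn] .
      have "(\<lambda>j. (m(k := m k + 1)) j - a j) \<in> mons n {}"
        using w kn unfolding mons_iff by auto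
      moreover have "0 < (m(k := m k + 1)) k - a k" using w kn unfolding mons_iff by auto
      ultimately have "m(k := m k + 1) \<notin> shifted_quot n {} B a" using k(1) by (auto simp: sq_iff)
      then have m'J: "m(k := m k + 1) \<in> J" using m'J' dif by blast
      have "\<forall>j\<in>{1..n}-A. (m(k := m k + 1)) j \<le> u j" using le k(2) by auto
      then show ?thesis using u m'J ext_char[OF mJ] by blast
    qed
  qed
qed

lemma key2:
  assumes A: "A \<subseteq> {1..n}" and mJ: "monomial_ideal n {} J" and mJ': "monomial_ideal n {} J'"
    and JJ: "J \<subseteq> J'" and dif: "J' - J = shifted_quot n {} B a"
    and BA: "B \<inter> A = {}" and Bn: "B \<subseteq> {1..n}" and a0: "\<forall>k. k \<notin> {1..n} \<longrightarrow> a k = 0"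
  shows "ext_ideal n A J' - ext_ideal n A J = shifted_quot n A B a"
proof -
  have "(\<lambda>j. a j - a j) \<in> mons n {}" unfolding mons_iff by auto
  then have "a \<in> shifted_quot n {} B a" by (simp add: sq_iff)
  then have aJ': "a \<in> J'" using dif by blast
  have am: "a \<in> mons n {}" using aJ' mi_sub[OF mJ'] by blast
  show ?thesis
  proof
    show "ext_ideal n A J' - ext_ideal n A J \<subseteq> shifted_quot n A B a"
    proof
      fix u assume uu: "u \<in> ext_ideal n A J' - ext_ideal n A J"
      then obtain m where u: "u \<in> mons n A" and m: "m \<in> J'" and le: "\<forall>j\<in>{1..n}-A. m j \<le> u j"
        using ext_char[OF mJ'] by blast
      have unJ: "u \<notin> ext_ideal n A J" using uu by blast
      have "m \<notin> J" using unJ u le ext_char[OF mJ] by blast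
      then have "m \<in> shifted_quot n {} B a" using m dif by blast
      then have w: "(\<lambda>j. m j - a j) \<in> mons n {}" and wB: "\<forall>k\<in>B. m k - a k \<le> 0"
        by (auto simp: sq_iff)
      have "(\<lambda>j. u j - a j) \<in> mons n A" using u a0 le w unfolding mons_iff by force
      moreover have "\<not>(\<exists>k\<in>B. 0 < u k - a k)"
      proof
        assume "\<exists>k\<in>B. 0 < u k - a k"
        then obtain k where k: "k \<in> B" "0 < u k - a k" by blast
        have kn: "k \<in> {1..n}" "k \<notin> A" using k(1) Bn BA by auto
        have m'J': "m(k := m k + 1) \<in> J'" using bump[OF mJ' m kn(1)] .
        have "(\<lambda>j. (m(k := m k + 1)) j - a j) \<in> mons n {}"
          using w kn unfolding mons_iff by auto
        moreover have "0 < (m(k := m k + 1)) k - a k" using w kn unfolding mons_iff by auto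
        ultimately have "m(k := m k + 1) \<notin> shifted_quot n {} B a" using k(1) by (auto simp: sq_iff)
        then have m'J: "m(k := m k + 1) \<in> J" using m'J' dif by blast
        have "m k - a k \<ge> 0" using w kn unfolding mons_iff by auto
        then have "m k = a k" using wB k(1) by force
        then have "\<forall>j\<in>{1..n}-A. (m(k := m k + 1)) j \<le> u j" using le k(2) by auto
        then show False using u m'J ext_char[OF mJ] unJ by blast
      qed
      ultimately show "u \<in> shifted_quot n A B a" by (simp add: sq_iff)
    qed
  next
    show "shifted_quot n A B a \<subseteq> ext_ideal n A J' - ext_ideal n A J"
    proof
      fix u assume "u \<in> shifted_quot n A B a"
      then have w: "(\<lambda>j. u j - a j) \<in> mons n A" and wB: "\<forall>k\<in>B. u k - a k \<le> 0"
        by (auto simp: sq_iff)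
      have um: "u \<in> mons n A" using w am unfolding mons_iff by force
      have "\<forall>j\<in>{1..n}-A. a j \<le> u j" using w unfolding mons_iff by force
      then have "u \<in> ext_ideal n A J'" using um aJ' ext_char[OF mJ'] by blast
      moreover have "u \<notin> ext_ideal n A J"
      proof
        assume "u \<in> ext_ideal n A J"
        then obtain m where m: "m \<in> J" and le: "\<forall>j\<in>{1..n}-A. m j \<le> u j"
          using ext_char[OF mJ] by blast
        have mm: "m \<in> mons n {}" using m mi_sub[OF mJ] by blast
        define z where "z = (\<lambda>k. if k \<in> A then max (m k) (a k) else u k)"
        have zm: "(\<lambda>k. z k - m k) \<in> mons n {}"
          using um mm le A unfolding mons_iff z_def by auto
        have "z = (\<lambda>k. m k + (\<lambda>k. z k - m k) k)" by auto
        then have zJ: "z \<in> J" using mi_add[OF mJ m zm] by simp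
        have "(\<lambda>k. z k - a k) \<in> mons n {}"
          using um am w A unfolding mons_iff z_def by force
        moreover have "\<not>(\<exists>k\<in>B. 0 < z k - a k)" using wB BA unfolding z_def by auto
        ultimately have "z \<in> shifted_quot n {} B a" by (simp add: sq_iff)
        then show False using zJ dif by blast
      qed
      ultimately show "u \<in> ext_ideal n A J' - ext_ideal n A J" by blast
    qed
  qed
qed

lemma pf_nil: "prime_filtration n A J I Js [] \<longleftrightarrow> Js = [J] \<and> J = I \<and> monomial_ideal n A J"
proof
  assume h: "prime_filtration n A J I Js []"
  have H: "length Js = Suc 0" "Js ! 0 = J" "Js ! 0 = I" "\<forall>i\<le>0. monomial_ideal n A (Js ! i)"
    using h unfolding prime_filtration_def list.size(3) by blast+
  then have l: "length Js = 1" and j: "Js ! 0 = J" "Js ! 0 = I" and m: "monomial_ideal n A (Js ! 0)"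
    by auto
  from l obtain x where "Js = [x]" by (metis One_nat_def length_0_conv length_Suc_conv)
  then show "Js = [J] \<and> J = I \<and> monomial_ideal n A J" using j m by simp
next
  assume h: "Js = [J] \<and> J = I \<and> monomial_ideal n A J"
  then have "Js = [I]" "J = I" "monomial_ideal n A I" by auto
  then show "prime_filtration n A J I Js []" unfolding prime_filtration_def by simp
qed

lemma pf_cons: "prime_filtration n A J I Js (p#ps) \<longleftrightarrow> (\<exists>J1 Js1. Js = J # Js1 \<and> monomial_ideal n A J \<and> J \<subseteq> J1
   \<and> (\<forall>k. k \<notin> {1..n} \<longrightarrow> fst p k = 0) \<and> snd p \<subseteq> {1..n} - A
   \<and> J1 - J = shifted_quot n A (snd p) (fst p) \<and> prime_filtration n A J1 I Js1 ps)"
proof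
  assume h: "prime_filtration n A J I Js (p#ps)"
  then obtain J0 Js1 where Js: "Js = J0 # Js1" unfolding prime_filtration_def by (cases Js) auto
  have l: "length Js1 = Suc (length ps)" using h Js unfolding prime_filtration_def by simp
  have nth: "\<And>i. Js1 ! i = Js ! Suc i" using Js by simp
  have psn: "\<And>i. ps ! i = (p#ps) ! Suc i" by simp
  have hh: "\<forall>i < Suc (length ps). Js ! i \<subseteq> Js ! Suc i \<and>
        (\<forall>k. k \<notin> {1..n} \<longrightarrow> fst ((p#ps) ! i) k = 0) \<and>
        snd ((p#ps) ! i) \<subseteq> {1..n} - A \<and>
        Js ! Suc i - Js ! i = shifted_quot n A (snd ((p#ps) ! i)) (fst ((p#ps) ! i))"
    using h unfolding prime_filtration_def by simp
  have hm: "\<forall>i \<le> Suc (length ps). monomial_ideal n A (Js ! i)"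
    using h unfolding prime_filtration_def by simp
  have F1: "\<forall>i \<le> length ps. monomial_ideal n A (Js1 ! i)"
  proof (intro allI impI)
    fix i assume "i \<le> length ps"
    then have "Suc i \<le> Suc (length ps)" by simp
    then show "monomial_ideal n A (Js1 ! i)" using hm unfolding nth by blast
  qed
  have F2: "\<forall>i < length ps. Js1 ! i \<subseteq> Js1 ! Suc i \<and>
        (\<forall>k. k \<notin> {1..n} \<longrightarrow> fst (ps ! i) k = 0) \<and>
        snd (ps ! i) \<subseteq> {1..n} - A \<and>
        Js1 ! Suc i - Js1 ! i = shifted_quot n A (snd (ps ! i)) (fst (ps ! i))"
  proof (intro allI impI)
    fix i assume "i < length ps"
    then have "Suc i < Suc (length ps)" by simp
    then have H: "Js ! Suc i \<subseteq> Js ! Suc (Suc i) \<and>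
        (\<forall>k. k \<notin> {1..n} \<longrightarrow> fst ((p#ps) ! Suc i) k = 0) \<and>
        snd ((p#ps) ! Suc i) \<subseteq> {1..n} - A \<and>
        Js ! Suc (Suc i) - Js ! Suc i = shifted_quot n A (snd ((p#ps) ! Suc i)) (fst ((p#ps) ! Suc i))"
      using hh by blast
    then show "Js1 ! i \<subseteq> Js1 ! Suc i \<and>
        (\<forall>k. k \<notin> {1..n} \<longrightarrow> fst (ps ! i) k = 0) \<and>
        snd (ps ! i) \<subseteq> {1..n} - A \<and>
        Js1 ! Suc i - Js1 ! i = shifted_quot n A (snd (ps ! i)) (fst (ps ! i))"
      unfolding nth psn .
  qed
  have F3: "Js1 ! length ps = I" using h unfolding nth prime_filtration_def by simp
  have "prime_filtration n A (Js1!0) I Js1 ps"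
    unfolding prime_filtration_def using l F1 F2 F3 by blast
  moreover have "J0 = J" using h Js unfolding prime_filtration_def by simp
  moreover have "monomial_ideal n A J \<and> J \<subseteq> Js1!0
   \<and> (\<forall>k. k \<notin> {1..n} \<longrightarrow> fst p k = 0) \<and> snd p \<subseteq> {1..n} - A
   \<and> Js1!0 - J = shifted_quot n A (snd p) (fst p)"
  proof -
    have a1: "Js ! 0 \<subseteq> Js ! Suc 0 \<and>
        (\<forall>k. k \<notin> {1..n} \<longrightarrow> fst ((p#ps) ! 0) k = 0) \<and>
        snd ((p#ps) ! 0) \<subseteq> {1..n} - A \<and>
        Js ! Suc 0 - Js ! 0 = shifted_quot n A (snd ((p#ps) ! 0)) (fst ((p#ps) ! 0))"
      using hh by blast
    have a2: "monomial_ideal n A (Js ! 0)" using hm by blast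
    have a3: "Js ! 0 = J" using h unfolding prime_filtration_def by simp
    show ?thesis using a1 a2 a3 unfolding nth[symmetric] by simp
  qed
  ultimately show "\<exists>J1 Js1. Js = J # Js1 \<and> monomial_ideal n A J \<and> J \<subseteq> J1
   \<and> (\<forall>k. k \<notin> {1..n} \<longrightarrow> fst p k = 0) \<and> snd p \<subseteq> {1..n} - A
   \<and> J1 - J = shifted_quot n A (snd p) (fst p) \<and> prime_filtration n A J1 I Js1 ps"
    using Js by blast
next
  assume "\<exists>J1 Js1. Js = J # Js1 \<and> monomial_ideal n A J \<and> J \<subseteq> J1
   \<and> (\<forall>k. k \<notin> {1..n} \<longrightarrow> fst p k = 0) \<and> snd p \<subseteq> {1..n} - A
   \<and> J1 - J = shifted_quot n A (snd p) (fst p) \<and> prime_filtration n A J1 I Js1 ps"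
  then obtain J1 Js1 where h: "Js = J # Js1" "monomial_ideal n A J" "J \<subseteq> J1"
   "(\<forall>k. k \<notin> {1..n} \<longrightarrow> fst p k = 0)" "snd p \<subseteq> {1..n} - A"
   "J1 - J = shifted_quot n A (snd p) (fst p)" "prime_filtration n A J1 I Js1 ps" by blast
  have J1: "Js1 ! 0 = J1" using h(7) unfolding prime_filtration_def by simp
  show "prime_filtration n A J I Js (p#ps)"
    unfolding prime_filtration_def
  proof (intro conjI)
    show "length Js = Suc (length (p # ps))" using h unfolding prime_filtration_def by simp
    show "Js ! 0 = J" using h by simp
    show "Js ! length (p # ps) = I" using h unfolding prime_filtration_def by simp
    show "\<forall>i\<le>length (p # ps). monomial_ideal n A (Js ! i)"
    proof (intro allI impI)
      fix i assume "i \<le> length (p # ps)"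
      then show "monomial_ideal n A (Js ! i)" using h unfolding prime_filtration_def
        by (cases i) auto
    qed
    show "\<forall>i<length (p # ps).
       Js ! i \<subseteq> Js ! Suc i \<and>
       (\<forall>k. k \<notin> {1..n} \<longrightarrow> fst ((p # ps) ! i) k = 0) \<and>
       snd ((p # ps) ! i) \<subseteq> {1..n} - A \<and>
       Js ! Suc i - Js ! i = shifted_quot n A (snd ((p # ps) ! i)) (fst ((p # ps) ! i))"
    proof (intro allI impI)
      fix i assume "i < length (p # ps)"
      then show "Js ! i \<subseteq> Js ! Suc i \<and>
       (\<forall>k. k \<notin> {1..n} \<longrightarrow> fst ((p # ps) ! i) k = 0) \<and>
       snd ((p # ps) ! i) \<subseteq> {1..n} - A \<and>
       Js ! Suc i - Js ! i = shifted_quot n A (snd ((p # ps) ! i)) (fst ((p # ps) ! i))"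
        using h J1 unfolding prime_filtration_def by (cases i) auto
    qed
  qed
qed

lemma lift:
  assumes A: "A \<subseteq> {1..n}"
  shows "prime_filtration n {} J I Js ps \<Longrightarrow> \<exists>Js' ps'. prime_filtration n A (ext_ideal n A J) (ext_ideal n A I) Js' ps' \<and> set ps' \<subseteq> set ps"
proof (induction ps arbitrary: J Js)
  case Nil
  then have "J = I" "monomial_ideal n {} J" by (auto simp: pf_nil)
  then have "prime_filtration n A (ext_ideal n A J) (ext_ideal n A I) [ext_ideal n A J] []"
    using ext_mi[OF A] by (simp add: pf_nil)
  then show ?case by blast
next
  case (Cons p ps)
  obtain a B where p: "p = (a, B)" by (cases p)
  from Cons.prems obtain J1 Js1 where h: "Js = J # Js1" "monomial_ideal n {} J" "J \<subseteq> J1"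
   "(\<forall>k. k \<notin> {1..n} \<longrightarrow> a k = 0)" "B \<subseteq> {1..n}"
   "J1 - J = shifted_quot n {} B a" "prime_filtration n {} J1 I Js1 ps"
    unfolding pf_cons p by auto
  have mJ1: "monomial_ideal n {} J1" using h(7) unfolding prime_filtration_def by force
  obtain Js' ps' where ih: "prime_filtration n A (ext_ideal n A J1) (ext_ideal n A I) Js' ps'" "set ps' \<subseteq> set ps"
    using Cons.IH[OF h(7)] by blast
  show ?case
  proof (cases "B \<inter> A = {}")
    case True
    have d: "ext_ideal n A J1 - ext_ideal n A J = shifted_quot n A B a"
      using key2[OF A h(2) mJ1 h(3) h(6) True h(5) h(4)] .
    have "prime_filtration n A (ext_ideal n A J) (ext_ideal n A I) (ext_ideal n A J # Js') (p # ps')"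
      unfolding pf_cons p fst_conv snd_conv
      using ext_mi[OF A h(2)] ext_mono[OF h(3)] h(4,5) True d ih(1)
      by (intro exI[of _ "ext_ideal n A J1"] exI[of _ Js'] conjI) auto
    then show ?thesis using ih(2) by (intro exI[of _ "ext_ideal n A J # Js'"] exI[of _ "p # ps'"]) auto
  next
    case False
    have "ext_ideal n A J1 = ext_ideal n A J" using key1[OF A h(2) mJ1 h(3) h(6) False] .
    then show ?thesis using ih by auto
  qed
qed

theorem theorem5p1:
  fixes n :: nat and A :: "nat set" and I J :: "(nat \<Rightarrow> int) set"
  assumes "A \<subseteq> {1..n}"
    and "monomial_ideal n {} J" and "monomial_ideal n {} I" and "J \<subseteq> I"
  shows "fdepth n {} J I \<le> fdepth n A (ext_ideal n A J) (ext_ideal n A I)"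
  unfolding fdepth_def
proof (rule SUP_least)
  fix x assume "x \<in> {(Js, ps). prime_filtration n {} J I Js ps}"
  then obtain Js ps where x: "x = (Js, ps)" "prime_filtration n {} J I Js ps" by blast
  obtain Js' ps' where l: "prime_filtration n A (ext_ideal n A J) (ext_ideal n A I) Js' ps'" "set ps' \<subseteq> set ps"
    using lift[OF assms(1) x(2)] by blast
  have 1: "fdepth_filt n ps \<le> fdepth_filt n ps'"
    unfolding fdepth_filt_def by (rule INF_superset_mono[OF l(2) order_refl])
  have "(Js', ps') \<in> {(Js, ps). prime_filtration n A (ext_ideal n A J) (ext_ideal n A I) Js ps}"
    using l(1) by simp
  from SUP_upper[OF this, of "\<lambda>(Js, ps). fdepth_filt n ps"]
  have 2: "fdepth_filt n ps' \<le> (SUP (Js, ps) \<in> {(Js, ps). prime_filtration n A (ext_ideal n A J) (ext_ideal n A I) Js ps}. fdepth_filt n ps)"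
    by simp
  show "(case x of (Js, ps) \<Rightarrow> fdepth_filt n ps) \<le> (SUP (Js, ps) \<in> {(Js, ps). prime_filtration n A (ext_ideal n A J) (ext_ideal n A I) Js ps}. fdepth_filt n ps)"
    using order_trans[OF 1 2] x(1) by simp
qed

end
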